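(* Let $G=(V,E)$ be a finite, undirected, unweighted, 2-vertex-connected graph with $n=|V|$ vertices. If $G$ contains a Hamiltonian path, then $G$ has a TSP tour of length at most $4n/3$.
   Context: A Hamiltonian path is a path in $G$ visiting every vertex exactly once. A TSP tour of $G$ is a closed walk in $G$ that visits every vertex at least once; its length is the number of edges traversed, counted with multiplicity. *)

theory Defs
  imports Main
begin

definition simple_graph :: "'a set \<Rightarrow> ('a \<Rightarrow> 'a \<Rightarrow> bool) \<Rightarrow> bool" where
  "simple_graph V E \<longleftrightarrow> finite V \<and> (\<forall>u v. E u v \<longrightarrow> u \<in> V \<and> v \<in> V)
     \<and> (\<forall>u v. E u v \<longrightarrow> E v u) \<and> (\<forall>v. \<not> E v v)"

definition is_walk :: "('a \<Rightarrow> 'a \<Rightarrow> bool) \<Rightarrow> 'a list \<Rightarrow> bool" where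
  "is_walk E w \<longleftrightarrow> w \<noteq> [] \<and> (\<forall>i. Suc i < length w \<longrightarrow> E (w ! i) (w ! Suc i))"

definition connected_on :: "('a \<Rightarrow> 'a \<Rightarrow> bool) \<Rightarrow> 'a set \<Rightarrow> bool" where
  "connected_on E S \<longleftrightarrow> (\<forall>u\<in>S. \<forall>v\<in>S. \<exists>w. is_walk E w \<and> set w \<subseteq> S \<and> hd w = u \<and> last w = v)"

definition two_connected :: "'a set \<Rightarrow> ('a \<Rightarrow> 'a \<Rightarrow> bool) \<Rightarrow> bool" where
  "two_connected V E \<longleftrightarrow> card V > 2 \<and> connected_on E V \<and> (\<forall>x\<in>V. connected_on E (V - {x}))"

definition hamiltonian_path :: "'a set \<Rightarrow> ('a \<Rightarrow> 'a \<Rightarrow> bool) \<Rightarrow> 'a list \<Rightarrow> bool" where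
  "hamiltonian_path V E p \<longleftrightarrow> is_walk E p \<and> distinct p \<and> set p = V"

definition tsp_tour :: "'a set \<Rightarrow> ('a \<Rightarrow> 'a \<Rightarrow> bool) \<Rightarrow> 'a list \<Rightarrow> bool" where
  "tsp_tour V E w \<longleftrightarrow> is_walk E w \<and> hd w = last w \<and> set w = V"

definition tour_length :: "'a list \<Rightarrow> nat" where
  "tour_length w = length w - 1"

end

theory Submission
  imports Defs
begin

lemma succ_upt:
  assumes "\<And>i. Suc i < n \<Longrightarrow> R i (Suc i)" "j \<le> n"
  shows "successively R [i..<j]"
  using assms by (auto simp: successively_conv_nth)

lemma succ_rev:
  assumes "\<And>i j. R i j \<Longrightarrow> R j i" "successively R xs"
  shows "successively R (rev xs)"
  using assms by (auto intro: successively_mono)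

lemma succ_app:
  "xs \<noteq> [] \<Longrightarrow> successively R xs \<Longrightarrow> successively R (last xs # ys) \<Longrightarrow> successively R (xs @ ys)"
  by (cases ys) (auto simp: successively_append_iff successively_Cons)

lemma ext_upt:
  assumes "\<And>i. Suc i < n \<Longrightarrow> R i (Suc i)"
  shows "successively R W \<Longrightarrow> W \<noteq> [] \<Longrightarrow> last W = x \<Longrightarrow> x \<le> m \<Longrightarrow> m < n \<Longrightarrow>
    successively R (W @ [Suc x..<Suc m]) \<and> last (W @ [Suc x..<Suc m]) = m"
proof (induction m)
  case 0
  then show ?case by simp
next
  case (Suc m)
  show ?case
  proof (cases "x = Suc m")
    case True
    then show ?thesis using Suc.prems by simp
  next
    case False
    then have "x \<le> m" using Suc.prems by simp
    with Suc have ih: "successively R (W @ [Suc x..<Suc m]) \<and> last (W @ [Suc x..<Suc m]) = m" by simp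
    have eq: "W @ [Suc x..<Suc (Suc m)] = (W @ [Suc x..<Suc m]) @ [Suc m]"
      using \<open>x \<le> m\<close> by simp
    from ih have s: "successively R (W @ [Suc x..<Suc m])" and l: "last (W @ [Suc x..<Suc m]) = m" by auto
    have "successively R (last (W @ [Suc x..<Suc m]) # [Suc m])" unfolding l using assms[of m] Suc.prems by simp
    from succ_app[OF _ s this] Suc.prems have "successively R ((W @ [Suc x..<Suc m]) @ [Suc m])" by simp
    then show ?thesis unfolding eq by simp
  qed
qed

lemma excursion:
  assumes "\<And>i. Suc i < n \<Longrightarrow> R i (Suc i)" "\<And>i j. R i j \<Longrightarrow> R j i" "a < y" "y < n"
  shows "successively R (y # rev [Suc a..<y] @ [Suc (Suc a)..<Suc y])"
proof (cases "Suc a = y")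
  case True
  then show ?thesis by simp
next
  case False
  then have "Suc a < y" using assms by simp
  have "y # rev [Suc a..<y] = rev [Suc a..<Suc y]" using \<open>Suc a < y\<close> by simp
  moreover have "successively R (rev [Suc a..<Suc y])"
    by (rule succ_rev[OF assms(2) succ_upt[of n R, OF assms(1)]]) (use assms in \<open>auto simp del: upt_Suc\<close>)
  moreover have "last (rev [Suc a..<Suc y]) = Suc a" using \<open>Suc a < y\<close>
    by (simp add: last_rev del: upt_Suc)
  moreover have "successively R (Suc a # [Suc (Suc a)..<Suc y])"
  proof -
    have "Suc a # [Suc (Suc a)..<Suc y] = [Suc a..<Suc y]" using \<open>Suc a < y\<close>
      by (simp add: upt_conv_Cons del: upt_Suc)
    then show ?thesis using succ_upt[of n R, OF assms(1), of "Suc y" "Suc a"] assms by (simp del: upt_Suc)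
  qed
  ultimately have s1: "successively R (y # rev [Suc a..<y])" and l1: "last (y # rev [Suc a..<y]) = Suc a"
    and s2: "successively R (Suc a # [Suc (Suc a)..<Suc y])" by (simp_all del: upt_Suc)
  from s2 have "successively R (last (y # rev [Suc a..<y]) # [Suc (Suc a)..<Suc y])" unfolding l1 .
  from succ_app[OF _ s1 this] show ?thesis by simp
qed

lemma succ_cons: "successively R ys \<Longrightarrow> ys \<noteq> [] \<Longrightarrow> R z (hd ys) \<Longrightarrow> successively R (z # ys)"
  by (cases ys) auto

lemma cover3: "x < (m::nat) \<Longrightarrow> ({0..x} \<union> {m}) \<union> {Suc x..<m} = {..<Suc m}"
proof (intro equalityI subsetI)
  fix z assume "x < m" "z \<in> {..<Suc m}"
  then show "z \<in> ({0..x} \<union> {m}) \<union> {Suc x..<m}" by (cases "z \<le> x"; cases "z = m") auto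
qed auto

lemma cover5: "x \<le> am \<Longrightarrow> am < (y::nat) \<Longrightarrow>
  {0..x} \<union> {y} \<union> {Suc x..<Suc am} \<union> {Suc am..<y} \<union> {Suc (Suc am)..<Suc y} = {0..y}"
proof (intro equalityI subsetI)
  fix z assume "x \<le> am" "am < y" "z \<in> {0..y}"
  then show "z \<in> {0..x} \<union> {y} \<union> {Suc x..<Suc am} \<union> {Suc am..<y} \<union> {Suc (Suc am)..<Suc y}"
    by (cases "z \<le> x"; cases "z \<le> am"; cases "z = y") auto
qed auto

lemma cover_last: "A \<subseteq> {..<n} \<Longrightarrow> n - 1 \<in> A \<Longrightarrow> 0 < (n::nat) \<Longrightarrow> {..<n-1} \<union> A = {..<n}"
proof (intro equalityI subsetI)
  fix z assume "z \<in> {..<n}" "A \<subseteq> {..<n}" "n - 1 \<in> A" "0 < n"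
  then show "z \<in> {..<n-1} \<union> A" by (cases "z = n - 1") auto
qed auto

lemma loop:
  assumes sym: "\<And>i j. R i j \<Longrightarrow> R j i"
    and pth: "\<And>i. Suc i < n \<Longrightarrow> R i (Suc i)"
    and cov: "\<And>i. 0 < i \<Longrightarrow> Suc i < n \<Longrightarrow> \<exists>a b. a < i \<and> i < b \<and> b < n \<and> R a b"
  shows "successively R U \<Longrightarrow> U \<noteq> [] \<Longrightarrow> hd U = 0 \<Longrightarrow> last U = y \<Longrightarrow>
    successively R W \<Longrightarrow> W \<noteq> [] \<Longrightarrow> hd W = 0 \<Longrightarrow> last W = x \<Longrightarrow>
    successively R U2 \<Longrightarrow> U2 \<noteq> [] \<Longrightarrow> hd U2 = 0 \<Longrightarrow> last U2 = y \<Longrightarrow>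
    successively R W2 \<Longrightarrow> W2 \<noteq> [] \<Longrightarrow> hd W2 = 0 \<Longrightarrow> last W2 = x \<Longrightarrow>
    x < y \<Longrightarrow> y < n \<Longrightarrow> set U \<subseteq> {..<n} \<Longrightarrow> set W \<subseteq> {..<n} \<Longrightarrow>
    set U2 \<union> set W2 = {0..x} \<union> {y} \<Longrightarrow>
    length U + length W + length U2 + length W2 = 2*x+6 \<Longrightarrow>
    (\<forall>a b. R a b \<longrightarrow> a < x \<longrightarrow> b < n \<longrightarrow> b \<le> y) \<Longrightarrow>
    \<exists>T. T \<noteq> [] \<and> successively R T \<and> hd T = last T \<and> set T = {..<n} \<and> 3*(length T - 1) \<le> 4*n"
proof (induction "n - y" arbitrary: x y U W U2 W2 rule: less_induct)
  case less
  show ?case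
  proof (cases "Suc y = n")
    case True
    define T1 where "T1 = [0..<n-1] @ rev U"
    define T2 where "T2 = [0..<n-1] @ rev (W @ [Suc x..<n])"
    define T3 where "T3 = U2 @ rev (W2 @ [Suc x..<n-1])"
    have n2: "Suc (Suc x) \<le> n" using True less.prems by simp
    have up: "successively R [0..<n-1]" by (rule succ_upt[of n R, OF pth]) auto
    have lup: "last [0..<n-1] = n - 2" using n2 by (simp add: last_upt)
    have ne: "[0..<n-1] \<noteq> []" using n2 by simp
    have hdrevU: "hd (rev U) = n - 1" using less.prems True by (simp add: hd_rev)
    have pn: "R (n-2) (n-1)" using pth[of "n-2"] n2 by (simp add: Suc_diff_Suc numeral_2_eq_2)
    have pn': "R (n-1) (n-2)" using sym[OF pn] .
    have sWx0: "successively R (W @ [Suc x..<Suc (n-1)]) \<and> last (W @ [Suc x..<Suc (n-1)]) = n - 1"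
      by (rule ext_upt[of n R, OF pth]) (use less.prems True in auto)
    have sWx: "successively R (W @ [Suc x..<n]) \<and> last (W @ [Suc x..<n]) = n - 1"
      using sWx0 True by simp
    have sW2x: "successively R (W2 @ [Suc x..<Suc (n-2)]) \<and> last (W2 @ [Suc x..<Suc (n-2)]) = n - 2"
      by (rule ext_upt[of n R, OF pth]) (use less.prems True in auto)
    have e2: "Suc (n-2) = n - 1" using n2 by simp
    have e1: "Suc (n-1) = n" using n2 by simp
    have t1: "T1 \<noteq> [] \<and> successively R T1 \<and> hd T1 = last T1 \<and> set T1 = {..<n}"
    proof -
      have "successively R (rev U)" using succ_rev[of R, OF sym] less.prems by blast
      moreover have "successively R (last [0..<n-1] # rev U)"
      proof (rule succ_cons[OF calculation])
        show "rev U \<noteq> []" using less.prems by simp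
        show "R (last [0..<n - 1]) (hd (rev U))" unfolding lup hdrevU using pn .
      qed
      ultimately have "successively R T1" unfolding T1_def using succ_app[OF ne up] by blast
      moreover have "set T1 = {..<n}"
      proof -
        have "n - 1 \<in> set U" using less.prems True by (metis diff_Suc_1 last_in_set)
        moreover have "set T1 = {..<n-1} \<union> set U" unfolding T1_def by auto
        ultimately show ?thesis using cover_last[of "set U" n] less.prems n2 by auto
      qed
      moreover have "hd T1 = last T1" unfolding T1_def using ne less.prems by (simp add: last_rev)
      ultimately show ?thesis unfolding T1_def using ne by simp
    qed
    have t2: "T2 \<noteq> [] \<and> successively R T2 \<and> hd T2 = last T2 \<and> set T2 = {..<n}"
    proof -
      have s: "successively R (rev (W @ [Suc x..<n]))" using succ_rev[of R, OF sym] sWx by blast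
      have h: "hd (rev (W @ [Suc x..<n])) = n - 1" using sWx e1 less.prems by (simp add: hd_rev)
      have "successively R (last [0..<n-1] # rev (W @ [Suc x..<n]))"
      proof (rule succ_cons[OF s])
        show "rev (W @ [Suc x..<n]) \<noteq> []" using less.prems by simp
        show "R (last [0..<n - 1]) (hd (rev (W @ [Suc x..<n])))" unfolding lup h using pn .
      qed
      then have "successively R T2" unfolding T2_def using succ_app[OF ne up] s by blast
      moreover have "set T2 = {..<n}"
      proof -
        have "set T2 = {..<n-1} \<union> set (W @ [Suc x..<n])" unfolding T2_def by auto
        moreover have "set (W @ [Suc x..<n]) \<subseteq> {..<n}" using less.prems by auto
        moreover have "n - 1 \<in> set (W @ [Suc x..<n])" using sWx by (metis last_in_set append_is_Nil_conv less.prems(6))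
        ultimately show ?thesis using cover_last[of "set (W @ [Suc x..<n])" n] n2 by auto
      qed
      moreover have "hd T2 = last T2" unfolding T2_def using ne less.prems by (simp add: last_rev)
      ultimately show ?thesis unfolding T2_def using ne by simp
    qed
    have t3: "T3 \<noteq> [] \<and> successively R T3 \<and> hd T3 = last T3 \<and> set T3 = {..<n}"
    proof -
      have sw: "successively R (W2 @ [Suc x..<n-1])" and lw: "last (W2 @ [Suc x..<n-1]) = n - 2"
        using sW2x unfolding e2 by simp_all
      have s: "successively R (rev (W2 @ [Suc x..<n-1]))" by (rule succ_rev[of R, OF sym sw])
      have h: "hd (rev (W2 @ [Suc x..<n-1])) = n - 2" using lw by (metis hd_rev)
      have lU2: "last U2 = n - 1" using less.prems True by simp
      have "successively R (last U2 # rev (W2 @ [Suc x..<n-1]))"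
      proof (rule succ_cons[OF s])
        show "rev (W2 @ [Suc x..<n-1]) \<noteq> []" using less.prems by simp
        show "R (last U2) (hd (rev (W2 @ [Suc x..<n-1])))" unfolding lU2 h using pn' .
      qed
      then have "successively R T3" unfolding T3_def by (rule succ_app[rotated 2]) (use less.prems in simp_all)
      moreover have "set T3 = {..<n}"
      proof -
        have "set T3 = set U2 \<union> set W2 \<union> {Suc x..<n-1}" unfolding T3_def by auto
        also have "\<dots> = ({0..x} \<union> {n-1}) \<union> {Suc x..<n-1}"
        proof -
          have yn: "n - 1 = y" using True by simp
          show ?thesis unfolding yn using less.prems(21) by simp
        qed
        also have "\<dots> = {..<Suc (n-1)}" by (rule cover3) (use n2 in simp)
        also have "\<dots> = {..<n}" using n2 by simp
        finally show ?thesis .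
      qed
      moreover have "hd T3 = last T3" unfolding T3_def using less.prems by (simp add: last_rev)
      ultimately show ?thesis unfolding T3_def using less.prems by simp
    qed
    have len: "(length T1 - 1) + (length T2 - 1) + (length T3 - 1) = 4*n - 2"
    proof -
      have "length T1 = n - 1 + length U" unfolding T1_def by simp
      moreover have "length T2 = n - 1 + (length W + (n - Suc x))" unfolding T2_def by simp
      moreover have "length T3 = length U2 + (length W2 + (n - 1 - Suc x))" unfolding T3_def by simp
      moreover have "length U \<ge> 1" "length W \<ge> 1" "length U2 \<ge> 1"
        using less.prems(2) less.prems(6) less.prems(10) by (auto simp: Suc_le_eq)
      ultimately show ?thesis using less.prems(22) n2 by linarith
    qed
    show ?thesis
    proof (cases "3*(length T1 - 1) \<le> 4*n")
      case True then show ?thesis using t1 by blast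
    next
      case False
      show ?thesis
      proof (cases "3*(length T2 - 1) \<le> 4*n")
        case True then show ?thesis using t2 by blast
      next
        case F2: False
        have "3*(length T3 - 1) \<le> 4*n" using False F2 len by linarith
        then show ?thesis using t3 by blast
      qed
    qed
  next
    case False
    then have sy: "Suc y < n" using less.prems(18) by simp
    have y0: "0 < y" using less.prems(17) by simp
    obtain a0 b0 where ab0: "a0 < y" "y < b0" "b0 < n" "R a0 b0" using cov[OF y0 sy] by blast
    define BS where "BS = {b. b < n \<and> (\<exists>a<y. R a b)}"
    have finBS: "finite BS" unfolding BS_def by simp
    have b0BS: "b0 \<in> BS" unfolding BS_def using ab0 by blast
    define bm where "bm = Max BS"
    have "bm \<in> BS" unfolding bm_def using finBS b0BS Max_in by blast
    then obtain am where am: "am < y" "R am bm" "bm < n" unfolding BS_def by blast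
    have "b0 \<le> bm" unfolding bm_def using finBS b0BS by simp
    then have ybm: "y < bm" using ab0 by simp
    have xam: "x \<le> am"
    proof (rule ccontr)
      assume "\<not> x \<le> am"
      then have "bm \<le> y" using less.prems(23) am by auto
      then show False using ybm by simp
    qed
    have maxp: "\<forall>a b. R a b \<longrightarrow> a < y \<longrightarrow> b < n \<longrightarrow> b \<le> bm"
      unfolding bm_def using finBS by (auto simp: BS_def intro!: Max_ge)
    define X where "X = rev [Suc am..<y] @ [Suc (Suc am)..<Suc y]"
    have exc: "successively R (y # X)" unfolding X_def
      by (rule excursion[of n R]) (use pth sym am less.prems(18) in auto)
    have lastX: "last (y # X) = y"
    proof (cases "Suc am = y")
      case True then show ?thesis unfolding X_def by simp
    next
      case False then have "Suc (Suc am) < Suc y" using am by simp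
      then show ?thesis unfolding X_def by simp
    qed
    have eW: "successively R (W @ [Suc x..<Suc am]) \<and> last (W @ [Suc x..<Suc am]) = am"
      by (rule ext_upt[of n R, OF pth]) (use less.prems xam am in auto)
    have eW2: "successively R (W2 @ [Suc x..<Suc am]) \<and> last (W2 @ [Suc x..<Suc am]) = am"
      by (rule ext_upt[of n R, OF pth]) (use less.prems xam am in auto)
    have sU': "successively R (W @ [Suc x..<Suc am] @ [bm])"
    proof -
      have "successively R ((W @ [Suc x..<Suc am]) @ [bm])"
        by (rule succ_app) (use eW am less.prems(6) in auto)
      then show ?thesis by simp
    qed
    have sU2': "successively R (W2 @ [Suc x..<Suc am] @ [bm])"
    proof -
      have "successively R ((W2 @ [Suc x..<Suc am]) @ [bm])"
        by (rule succ_app) (use eW2 am less.prems(14) in auto)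
      then show ?thesis by simp
    qed
    have sW2': "successively R (U2 @ X)"
      by (rule succ_app) (use exc less.prems(9,10,12) in auto)
    have lW2': "last (U2 @ X) = y" using lastX less.prems(12) by (cases X) auto
    have setU2W2: "set (W2 @ [Suc x..<Suc am] @ [bm]) \<union> set (U2 @ X) = {0..y} \<union> {bm}"
    proof -
      have "set (W2 @ [Suc x..<Suc am] @ [bm]) \<union> set (U2 @ X)
          = (set U2 \<union> set W2) \<union> {Suc x..<Suc am} \<union> {bm} \<union> {Suc am..<y} \<union> {Suc (Suc am)..<Suc y}"
        unfolding X_def by auto
      also have "\<dots> = ({0..x} \<union> {y} \<union> {Suc x..<Suc am} \<union> {Suc am..<y} \<union> {Suc (Suc am)..<Suc y}) \<union> {bm}"
        using less.prems(21) by auto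
      also have "\<dots> = {0..y} \<union> {bm}" using cover5[OF xam am(1)] by simp
      finally show ?thesis .
    qed
    have lenX: "length X = 2 * (y - Suc am)" unfolding X_def by (simp add: Suc_diff_Suc)
    show ?thesis
    proof (rule less.hyps[where x=y and y=bm and U="W @ [Suc x..<Suc am] @ [bm]" and W=U
          and ?U2.0="W2 @ [Suc x..<Suc am] @ [bm]" and ?W2.0="U2 @ X"])
      show "n - bm < n - y" using ybm am by simp
      show "length (W @ [Suc x..<Suc am] @ [bm]) + length U + length (W2 @ [Suc x..<Suc am] @ [bm]) +
        length (U2 @ X) = 2 * y + 6"
        using lenX less.prems(22) xam am by simp arith
      show "set (W @ [Suc x..<Suc am] @ [bm]) \<subseteq> {..<n}" using less.prems(20) am less.prems(18) by auto
    qed (use less.prems sU' sU2' sW2' lW2' setU2W2 maxp ybm am in auto)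
  qed
qed

lemma core:
  fixes R :: "nat \<Rightarrow> nat \<Rightarrow> bool"
  assumes sym: "\<And>i j. R i j \<Longrightarrow> R j i"
    and pth: "\<And>i. Suc i < n \<Longrightarrow> R i (Suc i)"
    and cov: "\<And>i. 0 < i \<Longrightarrow> Suc i < n \<Longrightarrow> \<exists>a b. a < i \<and> i < b \<and> b < n \<and> R a b"
    and n3: "3 \<le> n"
  shows "\<exists>T. T \<noteq> [] \<and> successively R T \<and> hd T = last T \<and> set T = {..<n} \<and> 3*(length T - 1) \<le> 4*n"
proof -
  obtain a0 b0 where ab0: "a0 < 1" "1 < b0" "b0 < n" "R a0 b0" using cov[of 1] n3 by auto
  define BS where "BS = {b. b < n \<and> R 0 b}"
  have finBS: "finite BS" unfolding BS_def by simp
  have b0BS: "b0 \<in> BS" unfolding BS_def using ab0 by simp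
  define bm where "bm = Max BS"
  have "bm \<in> BS" unfolding bm_def using finBS b0BS Max_in by blast
  then have bm: "R 0 bm" "bm < n" unfolding BS_def by auto
  have "b0 \<le> bm" unfolding bm_def using finBS b0BS by simp
  then have b1: "1 < bm" using ab0 by simp
  show ?thesis
  proof (rule loop[OF sym pth cov, where x=0 and y=bm and U="[0,bm]" and W="[0]"
        and ?U2.0="[0,bm]" and ?W2.0="[0]"])
    show "set [0, bm] \<union> set [0] = {0..0} \<union> {bm}" by auto
  qed (use bm b1 in auto)
qed

lemma walk_succ: "is_walk E w \<longleftrightarrow> w \<noteq> [] \<and> successively E w"
  by (simp add: is_walk_def successively_conv_nth)

lemma crossing:
  "xs \<noteq> [] \<Longrightarrow> successively Q xs \<Longrightarrow> f (hd xs) < (i::nat) \<Longrightarrow> i < f (last xs) \<Longrightarrow>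
   \<forall>z\<in>set xs. f z \<noteq> i \<Longrightarrow> \<exists>u v. Q u v \<and> u \<in> set xs \<and> v \<in> set xs \<and> f u < i \<and> i < f v"
proof (induction xs)
  case Nil
  then show ?case by simp
next
  case (Cons x xs)
  show ?case
  proof (cases "xs = []")
    case True
    then show ?thesis using Cons.prems by simp
  next
    case False
    have q: "Q x (hd xs)" "successively Q xs" using Cons.prems(2) False by (auto simp: successively_Cons)
    have hne: "f (hd xs) \<noteq> i" using Cons.prems(5) False by simp
    show ?thesis
    proof (cases "f (hd xs) < i")
      case True
      have "\<exists>u v. Q u v \<and> u \<in> set xs \<and> v \<in> set xs \<and> f u < i \<and> i < f v"
        using Cons.IH[OF False q(2) True] Cons.prems False by simp
      then show ?thesis by auto
    next
      case F: False
      then have "i < f (hd xs)" using hne by simp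
      then show ?thesis using q Cons.prems False by (intro exI[of _ x] exI[of _ "hd xs"]) auto
    qed
  qed
qed

theorem theorem2:
  fixes V :: "'a set" and E :: "'a \<Rightarrow> 'a \<Rightarrow> bool"
  assumes "simple_graph V E"
    and "two_connected V E"
    and "\<exists>p. hamiltonian_path V E p"
  shows "\<exists>w. tsp_tour V E w \<and> 3 * tour_length w \<le> 4 * card V"
proof -
  obtain p where hp: "hamiltonian_path V E p" using assms(3) by blast
  define n where "n = length p"
  have wp: "is_walk E p" and dp: "distinct p" and sp: "set p = V"
    using hp unfolding hamiltonian_path_def by auto
  have cardV: "card V = n" unfolding n_def using dp sp distinct_card by blast
  have tc: "card V > 2" "\<forall>x\<in>V. connected_on E (V - {x})"
    using assms(2) unfolding two_connected_def by auto
  have n3: "3 \<le> n" using tc cardV by simp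
  have symE: "\<And>u v. E u v \<Longrightarrow> E v u" using assms(1) unfolding simple_graph_def by blast
  define R where "R i j = E (p!i) (p!j)" for i j
  have symR: "\<And>i j. R i j \<Longrightarrow> R j i" unfolding R_def using symE by blast
  have pthR: "\<And>i. Suc i < n \<Longrightarrow> R i (Suc i)" unfolding R_def n_def using wp is_walk_def by blast
  define f where "f u = (SOME j. j < n \<and> p!j = u)" for u
  have fprop: "f u < n \<and> p!(f u) = u" if "u \<in> set p" for u
  proof -
    have "\<exists>j. j < n \<and> p!j = u" using that unfolding n_def by (simp add: in_set_conv_nth)
    then show ?thesis unfolding f_def by (rule someI_ex)
  qed
  have fnth: "f (p!j) = j" if "j < n" for j
  proof -
    have "p!j \<in> set p" using that n_def by simp
    then have a: "f (p!j) < length p" "p!(f (p!j)) = p!j" using fprop n_def by auto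
    have b: "j < length p" using that n_def by simp
    show ?thesis using nth_eq_iff_index_eq[OF dp a(1) b] a(2) by simp
  qed
  have covR: "\<exists>a b. a < i \<and> i < b \<and> b < n \<and> R a b" if i0: "0 < i" and isn: "Suc i < n" for i
  proof -
    define v where "v = p!i"
    have vV: "v \<in> V" unfolding v_def using sp isn n_def by auto
    have co: "connected_on E (V - {v})" using tc vV by blast
    have ilt: "i < length p" using isn n_def by simp
    have p0: "p!0 \<in> V - {v}"
    proof -
      have "p!0 \<noteq> p!i" using nth_eq_iff_index_eq[OF dp, of 0 i] ilt i0 by (cases p) auto
      moreover have "p!0 \<in> V" using sp ilt nth_mem[of 0 p] by (cases p) auto
      ultimately show ?thesis unfolding v_def by simp
    qed
    have pl: "p!(n-1) \<in> V - {v}"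
    proof -
      have nl: "n - 1 < length p" using n_def isn by simp
      have "n - 1 \<noteq> i" using isn by simp
      then have "p!(n-1) \<noteq> p!i" using nth_eq_iff_index_eq[OF dp nl ilt] by simp
      moreover have "p!(n-1) \<in> V" using sp nl nth_mem by blast
      ultimately show ?thesis unfolding v_def by simp
    qed
    obtain w where w: "is_walk E w" "set w \<subseteq> V - {v}" "hd w = p!0" "last w = p!(n-1)"
      using co p0 pl unfolding connected_on_def by blast
    have fh: "f (hd w) < i" using w(3) fnth[of 0] n3 i0 by simp
    have fl: "i < f (last w)" using w(4) fnth[of "n-1"] n3 isn by simp
    have nz: "\<forall>z\<in>set w. f z \<noteq> i"
    proof
      fix z assume "z \<in> set w"
      then have "z \<in> set p" "z \<noteq> v" using w(2) sp by auto
      then have "p!(f z) = z" using fprop by blast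
      then show "f z \<noteq> i" using \<open>z \<noteq> v\<close> v_def by auto
    qed
    have "w \<noteq> []" "successively E w" using w(1) unfolding walk_succ by auto
    from crossing[OF this fh fl nz]
    obtain u u' where uu: "E u u'" "u \<in> set w" "u' \<in> set w" "f u < i" "i < f u'"
      by blast
    have "u \<in> set p" "u' \<in> set p" using uu w(2) sp by auto
    then have "R (f u) (f u')" "f u' < n" unfolding R_def using fprop uu(1) by auto
    then show ?thesis using uu by blast
  qed
  obtain T where T: "T \<noteq> []" "successively R T" "hd T = last T" "set T = {..<n}"
    "3*(length T - 1) \<le> 4*n"
    using core[of R n, OF symR pthR covR n3] by blast
  define w where "w = map (\<lambda>i. p!i) T"
  have "is_walk E w" unfolding walk_succ w_def using T(1,2) by (simp add: successively_map R_def[abs_def])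
  moreover have "hd w = last w" unfolding w_def using T(1,3) by (simp add: hd_map last_map)
  moreover have "set w = V"
  proof -
    have "set w = (\<lambda>i. p!i) ` {..<length p}" unfolding w_def using T(4) n_def by simp
    also have "\<dots> = set p"
    proof (intro equalityI subsetI)
      fix z assume "z \<in> set p"
      then obtain j where "j < length p" "z = p!j" by (auto simp: in_set_conv_nth)
      then show "z \<in> (\<lambda>i. p!i) ` {..<length p}" by blast
    qed auto
    finally show ?thesis using sp by simp
  qed
  moreover have "3 * tour_length w \<le> 4 * card V" unfolding tour_length_def w_def using T(5) cardV by simp
  ultimately show ?thesis unfolding tsp_tour_def by blast
qed

end
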